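(* Let $n\ge3$ and $B_n=\langle a,b\mid ba=b^n\rangle$. 1. $\mathcal L(B_n)$ is closed under set addition, i.e. $L_1+L_2\in\mathcal L(B_n)$ for all $L_1,L_2\in\mathcal L(B_n)$; hence $\mathcal L(B_n)$ is a monoid under set addition with identity $\{0\}$. 2. The map $\Phi:\mathcal L(B_n)\to H$, $x+(n-2)\cdot[0,q]\mapsto(x,q)$, is a monoid isomorphism onto $H=\{(k,i)\mid k,i\in\mathbb N_0,\ k=i=0\text{ or }k>i\}\subset(\mathbb N_0^2,+)$. Moreover, $H$ is a reduced atomic commutative cancellative half-factorial monoid with $\mathcal A(H)=\{(k,k-1)\mid k\in\mathbb N\}$.
   Context: $B_n$ is the monoid with generators $a,b$ and single relation $ba=b^n$; its atoms are $a,b$. $\mathsf L(y)$ is the set of $k$ such that $y$ is a product of $k$ atoms ($\mathsf L(1)=\{0\}$), $\mathcal L(B_n)=\{\mathsf L(y)\mid y\in B_n\}$; every element of $\mathcal L(B_n)$ has the form $x+(n-2)\cdot[0,q]=\{x,x+(n-2),\dots,x+q(n-2)\}$ with $x,q\in\mathbb N_0$ and ($x=q=0$ or $x>q$), uniquely determined by $(x,q)$. For sets $L_1,L_2\subset\mathbb Z$, $L_1+L_2=\{l_1+l_2\mid l_i\in L_i\}$. A monoid is half-factorial if every non-unit's factorizations into atoms all have the same length; $\mathcal A(H)$ denotes the set of atoms. *)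

theory Defs
  imports Main "HOL-Library.Set_Algebras" "HOL-Library.Product_Plus"
begin

datatype letter = A | B

text \<open>One-step rewriting u (b a) v ~> u b^n v; its equivalence closure is the
  monoid congruence generated by the relation ba = b^n, so the classes are
  exactly the elements of B_n.\<close>

definition Bstep :: "nat \<Rightarrow> letter list \<Rightarrow> letter list \<Rightarrow> bool" where
  "Bstep n u v \<longleftrightarrow> (\<exists>p s. u = p @ [B, A] @ s \<and> v = p @ replicate n B @ s)"

definition Bcong :: "nat \<Rightarrow> letter list \<Rightarrow> letter list \<Rightarrow> bool" where
  "Bcong n = equivclp (Bstep n)"

text \<open>Since the atoms of B_n are a and b, a factorization of the element
  represented by w of length k is a word of length k representing the same
  element. Hence the set of lengths:\<close>

definition Lset :: "nat \<Rightarrow> letter list \<Rightarrow> nat set" where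
  "Lset n w = {length w' | w'. Bcong n w w'}"

definition LB :: "nat \<Rightarrow> nat set set" where
  "LB n = {Lset n w | w. True}"

definition arith_set :: "nat \<Rightarrow> nat \<Rightarrow> nat \<Rightarrow> nat set" where
  "arith_set n x q = {x + (n - 2) * j | j. j \<le> q}"

definition Phi :: "nat \<Rightarrow> nat set \<Rightarrow> nat \<times> nat" where
  "Phi n L = (THE (x, q). L = arith_set n x q \<and> ((x = 0 \<and> q = 0) \<or> x > q))"

definition Hset :: "(nat \<times> nat) set" where
  "Hset = {(k, i). (k = 0 \<and> i = 0) \<or> k > i}"

definition submonoid :: "'a::comm_monoid_add set \<Rightarrow> bool" where
  "submonoid S \<longleftrightarrow> 0 \<in> S \<and> (\<forall>x\<in>S. \<forall>y\<in>S. x + y \<in> S)"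

definition units_in :: "'a::comm_monoid_add set \<Rightarrow> 'a set" where
  "units_in S = {u \<in> S. \<exists>v\<in>S. u + v = 0}"

definition atoms_of :: "'a::comm_monoid_add set \<Rightarrow> 'a set" where
  "atoms_of S = {a \<in> S. a \<notin> units_in S \<and>
     (\<forall>u\<in>S. \<forall>v\<in>S. a = u + v \<longrightarrow> u \<in> units_in S \<or> v \<in> units_in S)}"

definition reduced :: "'a::comm_monoid_add set \<Rightarrow> bool" where
  "reduced S \<longleftrightarrow> units_in S = {0}"

definition cancellative_in :: "'a::comm_monoid_add set \<Rightarrow> bool" where
  "cancellative_in S \<longleftrightarrow> (\<forall>x\<in>S. \<forall>y\<in>S. \<forall>z\<in>S. x + z = y + z \<longrightarrow> x = y)"

definition commutative_in :: "'a::comm_monoid_add set \<Rightarrow> bool" where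
  "commutative_in S \<longleftrightarrow> (\<forall>x\<in>S. \<forall>y\<in>S. x + y = y + x)"

definition atomic :: "'a::comm_monoid_add set \<Rightarrow> bool" where
  "atomic S \<longleftrightarrow> (\<forall>x\<in>S - units_in S. \<exists>as. as \<noteq> [] \<and> set as \<subseteq> atoms_of S \<and> sum_list as = x)"

definition half_factorial :: "'a::comm_monoid_add set \<Rightarrow> bool" where
  "half_factorial S \<longleftrightarrow> atomic S \<and>
     (\<forall>x\<in>S - units_in S. \<forall>as bs. set as \<subseteq> atoms_of S \<and> set bs \<subseteq> atoms_of S
        \<and> sum_list as = x \<and> sum_list bs = x \<longrightarrow> length as = length bs)"

end

theory Submission
  imports Defs
begin

fun lead :: "letter list \<Rightarrow> nat" where
  "lead [] = 0" | "lead (A # w) = Suc (lead w)" | "lead (B # w) = 0"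

fun wt :: "nat \<Rightarrow> letter list \<Rightarrow> nat" where
  "wt n [] = 0" | "wt n (A # w) = (n - 1) + wt n w" | "wt n (B # w) = Suc (wt n w)"

fun na :: "letter list \<Rightarrow> nat" where
  "na [] = 0" | "na (A # w) = Suc (na w)" | "na (B # w) = na w"

lemma wt_append[simp]: "wt n (u @ v) = wt n u + wt n v"
proof (induction u)
  case (Cons x u) thus ?case by (cases x) auto
qed simp

lemma na_append[simp]: "na (u @ v) = na u + na v"
proof (induction u)
  case (Cons x u) thus ?case by (cases x) auto
qed simp

lemma wt_repB[simp]: "wt n (replicate m B) = m" by (induction m) auto
lemma wt_repA[simp]: "wt n (replicate m A) = (n-1)*m" by (induction m) auto
lemma na_repB[simp]: "na (replicate m B) = 0" by (induction m) auto
lemma na_repA[simp]: "na (replicate m A) = m" by (induction m) auto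
lemma lead_repA[simp]: "lead (replicate m A @ B # u) = m" by (induction m) auto
lemma lead_repA'[simp]: "lead (replicate m A) = m" by (induction m) auto

lemma lead_repB: "m \<ge> 1 \<Longrightarrow> lead (replicate m B @ s) = 0" by (cases m) auto

lemma lead_step: "n \<ge> 1 \<Longrightarrow> lead (p @ [B, A] @ s) = lead (p @ replicate n B @ s)"
proof (induction p)
  case Nil thus ?case by (simp add: lead_repB)
next
  case (Cons x p) thus ?case by (cases x) auto
qed

lemma step_inv: assumes "n \<ge> 1" "Bstep n u v" shows "lead u = lead v \<and> wt n u = wt n v"
proof -
  obtain p s where "u = p @ [B, A] @ s" "v = p @ replicate n B @ s"
    using assms(2) unfolding Bstep_def by blast
  thus ?thesis using lead_step[OF assms(1)] assms(1) by simp
qed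

lemma cong_inv: assumes "n \<ge> 1" "Bcong n u v" shows "lead u = lead v \<and> wt n u = wt n v"
  using assms(2) unfolding Bcong_def
proof (induction rule: equivclp_induct)
  case base thus ?case by simp
next
  case (step y z) thus ?case using step_inv[OF assms(1), of y z] step_inv[OF assms(1), of z y] by auto
qed

lemma step_prefix: "Bstep n u v \<Longrightarrow> Bstep n (x @ u) (x @ v)"
  unfolding Bstep_def by (metis append.assoc)

lemma cong_prefix: assumes "Bcong n u v" shows "Bcong n (x @ u) (x @ v)"
  using assms unfolding Bcong_def
proof (induction rule: equivclp_induct)
  case base thus ?case by simp
next
  case (step y z) thus ?case
    by (meson equivclp_into_equivclp step_prefix)
qed

lemma rep: assumes "n \<ge> 1" "m \<ge> 1" shows "Bcong n (replicate m B @ u) (replicate (m + wt n u) B)"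
  using assms(2)
proof (induction u arbitrary: m)
  case Nil thus ?case by (simp add: Bcong_def)
next
  case (Cons x u)
  show ?case
  proof (cases x)
    case A
    have e1: "replicate m B @ A # u = replicate (m - 1) B @ [B, A] @ u"
    proof -
      obtain m' where "m = Suc m'" using Cons.prems by (cases m) auto
      thus ?thesis by (simp add: replicate_app_Cons_same)
    qed
    have e2: "replicate (m - 1) B @ replicate n B @ u = replicate (m - 1 + n) B @ u"
      by (simp add: replicate_add)
    have "Bstep n (replicate m B @ A # u) (replicate (m - 1 + n) B @ u)"
      unfolding Bstep_def using e1 e2 by metis
    hence s: "Bcong n (replicate m B @ A # u) (replicate (m - 1 + n) B @ u)"
      unfolding Bcong_def by blast
    have c2: "Bcong n (replicate (m - 1 + n) B @ u) (replicate (m - 1 + n + wt n u) B)"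
      using Cons.IH assms(1) by simp
    have eq: "m - 1 + n + wt n u = m + wt n (x # u)" using A Cons.prems assms(1) by simp
    have "Bcong n (replicate (m - 1 + n) B @ u) (replicate (m + wt n (x # u)) B)"
      using c2 by (simp only: eq)
    thus ?thesis using s unfolding Bcong_def A by (rule equivclp_trans[rotated])
  next
    case B
    have "Bcong n (replicate (Suc m) B @ u) (replicate (Suc m + wt n u) B)"
      using Cons.IH[of "Suc m"] by simp
    thus ?thesis using B by (simp add: replicate_app_Cons_same)
  qed
qed

lemma lead_wt: "(n - 1) * lead w \<le> wt n w"
proof (induction w)
  case (Cons x w) thus ?case by (cases x) auto
qed simp

lemma nf: assumes "n \<ge> 1"
  shows "Bcong n w (replicate (lead w) A @ replicate (wt n w - (n - 1) * lead w) B)"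
proof (induction w)
  case Nil thus ?case by (simp add: Bcong_def)
next
  case (Cons x w)
  show ?case
  proof (cases x)
    case A
    have "wt n (A # w) - (n - 1) * lead (A # w) = wt n w - (n - 1) * lead w"
      using lead_wt[of n w] by simp
    thus ?thesis using cong_prefix[OF Cons.IH, of "[A]"] A by simp
  next
    case B
    thus ?thesis using rep[OF assms, of 1 w] by simp
  qed
qed

lemma cong_iff: assumes "n \<ge> 1"
  shows "Bcong n u v \<longleftrightarrow> lead u = lead v \<and> wt n u = wt n v"
proof
  assume "Bcong n u v" thus "lead u = lead v \<and> wt n u = wt n v" using cong_inv assms by blast
next
  assume h: "lead u = lead v \<and> wt n u = wt n v"
  have "Bcong n u (replicate (lead u) A @ replicate (wt n u - (n - 1) * lead u) B)" by (rule nf[OF assms])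
  moreover have "Bcong n v (replicate (lead u) A @ replicate (wt n u - (n - 1) * lead u) B)"
    using nf[OF assms, of v] h by simp
  ultimately show "Bcong n u v" unfolding Bcong_def by (metis equivclp_sym equivclp_trans)
qed


lemma len_wt: "wt n u + na u = length u + (n - 1) * na u \<and> na u \<le> length u"
proof (induction u)
  case (Cons x u) thus ?case by (cases x) auto
qed simp

lemma lenset: assumes "n \<ge> 3"
  shows "{length u | u. wt n u = M} = arith_set n (M - (n - 2) * (M div (n - 1))) (M div (n - 1))"
proof -
  define k where "k = n - 2"
  define Q where "Q = M div (n - 1)"
  have n1: "n - 1 = k + 1" using assms k_def by simp
  have kQ: "(k + 1) * Q \<le> M" unfolding Q_def n1 by (metis div_mult_self1_is_m le_add2 add_gr_0 zero_less_one div_times_less_eq_dividend mult.commute)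
  show ?thesis
  proof (intro set_eqI iffI)
    fix y assume "y \<in> {length u | u. wt n u = M}"
    then obtain u where u: "y = length u" "wt n u = M" by blast
    define a where "a = na u"
    have e: "M + a = y + (k + 1) * a" "a \<le> y" using len_wt[of n u] u n1 a_def by auto
    have "(k + 1) * a \<le> M" using e by linarith
    hence "a \<le> Q" unfolding Q_def n1
      by (metis add_gr_0 div_le_mono nonzero_mult_div_cancel_left zero_less_one less_numeral_extra(3) add_eq_0_iff_both_eq_0 one_neq_zero)
    hence "k * a \<le> k * Q" by simp
    have "k * (Q - a) = k * Q - k * a" by (simp add: diff_mult_distrib2)
    have "y = (M - k * Q) + k * (Q - a)"
      using e kQ \<open>k * a \<le> k * Q\<close> \<open>k * (Q - a) = k * Q - k * a\<close> by (simp add: algebra_simps)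
    thus "y \<in> arith_set n (M - (n - 2) * (M div (n - 1))) (M div (n - 1))"
      unfolding arith_set_def using \<open>a \<le> Q\<close> k_def Q_def by auto
  next
    fix y assume "y \<in> arith_set n (M - (n - 2) * (M div (n - 1))) (M div (n - 1))"
    then obtain j where j: "j \<le> Q" "y = (M - k * Q) + k * j" unfolding arith_set_def k_def Q_def by auto
    define a where "a = Q - j"
    define u where "u = replicate a A @ replicate (M - (k + 1) * a) B"
    have "(k+1) * a \<le> (k+1) * Q" unfolding a_def by (intro mult_le_mono2) simp
    hence ka: "(k + 1) * a \<le> M" using kQ by linarith
    have "wt n u = M" unfolding u_def using n1 ka by simp
    moreover have "length u = y"
    proof -
      have "k * (Q - a) = k * Q - k * a" by (simp add: diff_mult_distrib2)
      moreover have "k * a \<le> k * Q" unfolding a_def by (intro mult_le_mono2) simp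
      moreover have "j = Q - a" using j(1) a_def by simp
      ultimately show ?thesis unfolding u_def using j(2) ka kQ by (simp add: algebra_simps)
    qed
    ultimately show "y \<in> {length u | u. wt n u = M}" by blast
  qed
qed


lemma split_lead: "\<exists>r. w = replicate (lead w) A @ r \<and> (r = [] \<or> (\<exists>u. r = B # u))"
proof (induction w)
  case (Cons x w) thus ?case by (cases x) auto
qed simp

lemma arith_shift: "(\<lambda>y. c + y) ` arith_set n x q = arith_set n (c + x) q"
  unfolding arith_set_def by (auto simp: image_iff add.assoc)

lemma Lset_alt: assumes "n \<ge> 1" shows "Lset n w = {length w' | w'. lead w' = lead w \<and> wt n w' = wt n w}"
  unfolding Lset_def using cong_iff[OF assms] by metis

lemma Lset_R0: assumes "n \<ge> 3" "wt n w = (n - 1) * lead w"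
  shows "Lset n w = arith_set n (lead w) 0"
proof -
  have "{length w' | w'. lead w' = lead w \<and> wt n w' = wt n w} = {lead w}"
  proof (intro set_eqI iffI)
    fix y assume "y \<in> {length w' | w'. lead w' = lead w \<and> wt n w' = wt n w}"
    then obtain w' where w': "y = length w'" "lead w' = lead w" "wt n w' = wt n w" by blast
    obtain r where r: "w' = replicate (lead w') A @ r" "r = [] \<or> (\<exists>u. r = B # u)" using split_lead by blast
    have "wt n w' = (n - 1) * lead w' + wt n r" using arg_cong[OF r(1), of "wt n"] by simp
    hence "wt n r = 0" using w'(2,3) assms(2) by simp
    hence "r = []" using r(2) by auto
    hence "length w' = lead w" using arg_cong[OF r(1), of length] w'(2) by simp
    thus "y \<in> {lead w}" using w'(1) by simp
  next
    fix y assume "y \<in> {lead w}"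
    thus "y \<in> {length w' | w'. lead w' = lead w \<and> wt n w' = wt n w}"
      using assms(2) by (intro CollectI exI[of _ "replicate (lead w) A"]) auto
  qed
  moreover have "arith_set n (lead w) 0 = {lead w}" unfolding arith_set_def by auto
  ultimately show ?thesis using Lset_alt assms(1) by simp
qed

lemma Lset_R1: assumes "n \<ge> 3" "wt n w > (n - 1) * lead w"
  shows "Lset n w = (\<lambda>y. Suc (lead w) + y) ` {length u | u. wt n u = wt n w - (n - 1) * lead w - 1}"
proof -
  define l where "l = lead w"
  define R where "R = wt n w - (n - 1) * l"
  have R: "R > 0" "wt n w = (n - 1) * l + R" using assms(2) unfolding R_def l_def by auto
  have "{length w' | w'. lead w' = l \<and> wt n w' = wt n w} = (\<lambda>y. Suc l + y) ` {length u | u. wt n u = R - 1}"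
  proof (intro set_eqI iffI)
    fix y assume "y \<in> {length w' | w'. lead w' = l \<and> wt n w' = wt n w}"
    then obtain w' where w': "y = length w'" "lead w' = l" "wt n w' = wt n w" by blast
    obtain r where r: "w' = replicate l A @ r" "r = [] \<or> (\<exists>u. r = B # u)" using split_lead w'(2) by metis
    have "wt n w' = (n - 1) * l + wt n r" using arg_cong[OF r(1), of "wt n"] by simp
    hence "wt n r = R" using w'(3) R by linarith
    hence "r \<noteq> []" using R by auto
    then obtain u where u: "r = B # u" using r(2) by blast
    have "wt n u = R - 1" using \<open>wt n r = R\<close> u by simp
    moreover have "y = Suc l + length u" using w'(1) r(1) u by simp
    ultimately show "y \<in> (\<lambda>y. Suc l + y) ` {length u | u. wt n u = R - 1}" by blast
  next
    fix y assume "y \<in> (\<lambda>y. Suc l + y) ` {length u | u. wt n u = R - 1}"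
    then obtain u where u: "y = Suc l + length u" "wt n u = R - 1" by blast
    define w' where "w' = replicate l A @ B # u"
    have "lead w' = l" "wt n w' = wt n w" "length w' = y" unfolding w'_def using u R by auto
    thus "y \<in> {length w' | w'. lead w' = l \<and> wt n w' = wt n w}" by blast
  qed
  thus ?thesis using Lset_alt[of n w] assms(1) unfolding l_def R_def by simp
qed

lemma Lset_char: assumes "n \<ge> 3"
  shows "\<exists>x q. (x, q) \<in> Hset \<and> Lset n w = arith_set n x q"
proof (cases "wt n w = (n - 1) * lead w")
  case True
  thus ?thesis using Lset_R0[OF assms True] unfolding Hset_def by (intro exI[of _ "lead w"] exI[of _ 0]) auto
next
  case False
  hence gt: "wt n w > (n - 1) * lead w" using lead_wt[of n w] by simp
  define M where "M = wt n w - (n - 1) * lead w - 1"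
  define Q where "Q = M div (n - 1)"
  have "Lset n w = (\<lambda>y. Suc (lead w) + y) ` {length u | u. wt n u = M}"
    using Lset_R1[OF assms gt] unfolding M_def .
  also have "\<dots> = (\<lambda>y. Suc (lead w) + y) ` arith_set n (M - (n - 2) * Q) Q"
    unfolding Q_def lenset[OF assms] ..
  also have "\<dots> = arith_set n (Suc (lead w) + (M - (n - 2) * Q)) Q" by (rule arith_shift)
  finally have "Lset n w = arith_set n (Suc (lead w) + (M - (n - 2) * Q)) Q" .
  moreover have "Suc (lead w) + (M - (n - 2) * Q) > Q"
  proof -
    have "(n - 1) * Q \<le> M" unfolding Q_def by (simp add: div_times_less_eq_dividend mult.commute)
    moreover have "(n - 1) * Q = (n - 2) * Q + Q" 
    proof - have "n - 1 = Suc (n - 2)" using assms by simp thus ?thesis by simp qed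
    ultimately show ?thesis by linarith
  qed
  ultimately show ?thesis unfolding Hset_def by blast
qed


lemma Lset_real: assumes "n \<ge> 3" "(x, q) \<in> Hset"
  shows "\<exists>w. Lset n w = arith_set n x q"
proof (cases "q = 0")
  case True
  have "Lset n (replicate x A) = arith_set n x 0" using Lset_R0[OF assms(1), of "replicate x A"] by simp
  thus ?thesis using True by blast
next
  case False
  hence xq: "x > q" using assms(2) unfolding Hset_def by auto
  define w where "w = replicate (x - q - 1) A @ B # replicate q A"
  have lw: "lead w = x - q - 1" unfolding w_def by simp
  have ww: "wt n w = (n - 1) * (x - q - 1) + Suc ((n - 1) * q)" unfolding w_def by simp
  have "Lset n w = (\<lambda>y. Suc (x - q - 1) + y) ` {length u | u. wt n u = (n - 1) * q}"
    using Lset_R1[OF assms(1), of w] lw ww by simp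
  also have "\<dots> = (\<lambda>y. Suc (x - q - 1) + y) ` arith_set n ((n - 1) * q - (n - 2) * ((n - 1) * q div (n - 1))) ((n - 1) * q div (n - 1))"
    unfolding lenset[OF assms(1)] ..
  also have "(n - 1) * q div (n - 1) = q" using assms(1) by simp
  also have "(\<lambda>y. Suc (x - q - 1) + y) ` arith_set n ((n - 1) * q - (n - 2) * q) q = arith_set n (Suc (x - q - 1) + ((n - 1) * q - (n - 2) * q)) q"
    by (rule arith_shift)
  also have "Suc (x - q - 1) + ((n - 1) * q - (n - 2) * q) = x"
  proof -
    have "(n - 1) * q = (n - 2) * q + q" 
    proof - have "n - 1 = Suc (n - 2)" using assms by simp thus ?thesis by simp qed
    thus ?thesis using xq by simp
  qed
  finally show ?thesis by blast
qed

lemma LB_eq: assumes "n \<ge> 3" shows "LB n = (\<lambda>(x, q). arith_set n x q) ` Hset"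
proof (intro set_eqI iffI)
  fix L assume "L \<in> LB n"
  then obtain w where "L = Lset n w" unfolding LB_def by blast
  thus "L \<in> (\<lambda>(x, q). arith_set n x q) ` Hset" using Lset_char[OF assms, of w] by force
next
  fix L assume "L \<in> (\<lambda>(x, q). arith_set n x q) ` Hset"
  then obtain p where "p \<in> Hset" "L = (\<lambda>(x, q). arith_set n x q) p" by blast
  then obtain x q where "(x, q) \<in> Hset" "L = arith_set n x q" by (cases p) auto
  thus "L \<in> LB n" using Lset_real[OF assms] unfolding LB_def by fastforce
qed

lemma arith_inj: assumes "n \<ge> 3" "arith_set n x q = arith_set n x' q'" shows "x = x' \<and> q = q'"
proof -
  have k: "n - 2 > 0" using assms(1) by simp
  have "x \<in> arith_set n x' q'" using assms(2) unfolding arith_set_def by (metis (mono_tags, lifting) CollectI add_0_right le0 mult_0_right)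
  hence "x' \<le> x" unfolding arith_set_def by auto
  have "x' \<in> arith_set n x q" using assms(2) unfolding arith_set_def by (metis (mono_tags, lifting) CollectI add_0_right le0 mult_0_right)
  hence "x \<le> x'" unfolding arith_set_def by auto
  hence xx: "x = x'" using \<open>x' \<le> x\<close> by simp
  have "x + (n - 2) * q \<in> arith_set n x' q'" using assms(2) unfolding arith_set_def by blast
  then obtain j where "j \<le> q'" "(n - 2) * q = (n - 2) * j" using xx unfolding arith_set_def by auto
  hence "q \<le> q'" using k by simp
  have "x' + (n - 2) * q' \<in> arith_set n x q" using assms(2) unfolding arith_set_def by blast
  then obtain j' where "j' \<le> q" "(n - 2) * q' = (n - 2) * j'" using xx unfolding arith_set_def by auto
  hence "q' \<le> q" using k by simp
  thus ?thesis using xx \<open>q \<le> q'\<close> by simp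
qed

lemma Phi_arith: assumes "n \<ge> 3" "(x, q) \<in> Hset" shows "Phi n (arith_set n x q) = (x, q)"
  unfolding Phi_def
proof (rule the_equality)
  show "case (x, q) of (x', q') \<Rightarrow> arith_set n x q = arith_set n x' q' \<and> (x' = 0 \<and> q' = 0 \<or> q' < x')"
    using assms(2) unfolding Hset_def by auto
next
  fix z assume "case z of (x', q') \<Rightarrow> arith_set n x q = arith_set n x' q' \<and> (x' = 0 \<and> q' = 0 \<or> q' < x')"
  thus "z = (x, q)" using arith_inj[OF assms(1)] by (cases z) auto
qed

lemma arith_sum: "arith_set n x1 q1 + arith_set n x2 q2 = arith_set n (x1 + x2) (q1 + q2)"
proof (intro set_eqI iffI)
  fix y assume "y \<in> arith_set n x1 q1 + arith_set n x2 q2"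
  then obtain j1 j2 where "j1 \<le> q1" "j2 \<le> q2" "y = x1 + (n - 2) * j1 + (x2 + (n - 2) * j2)"
    unfolding set_plus_def arith_set_def by auto
  thus "y \<in> arith_set n (x1 + x2) (q1 + q2)" unfolding arith_set_def
    by (intro CollectI exI[of _ "j1 + j2"]) (simp add: add_mult_distrib2)
next
  fix y assume "y \<in> arith_set n (x1 + x2) (q1 + q2)"
  then obtain j where j: "j \<le> q1 + q2" "y = x1 + x2 + (n - 2) * j" unfolding arith_set_def by auto
  define j1 where "j1 = min j q1"
  define j2 where "j2 = j - j1"
  have "j1 \<le> q1" "j2 \<le> q2" "j = j1 + j2" using j(1) unfolding j1_def j2_def by auto
  hence "y = (x1 + (n - 2) * j1) + (x2 + (n - 2) * j2)" using j(2) by (simp add: add_mult_distrib2)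
  moreover have "x1 + (n - 2) * j1 \<in> arith_set n x1 q1" using \<open>j1 \<le> q1\<close> unfolding arith_set_def by blast
  moreover have "x2 + (n - 2) * j2 \<in> arith_set n x2 q2" using \<open>j2 \<le> q2\<close> unfolding arith_set_def by blast
  ultimately show "y \<in> arith_set n x1 q1 + arith_set n x2 q2" unfolding set_plus_def by blast
qed

lemma H_add: "a \<in> Hset \<Longrightarrow> b \<in> Hset \<Longrightarrow> a + b \<in> Hset"
  unfolding Hset_def by (cases a; cases b) auto


lemma H_zero: "(0::nat\<times>nat) = (0, 0)" by (simp add: zero_prod_def)

lemma units_H: "units_in Hset = {0}"
  unfolding units_in_def Hset_def by (auto simp: zero_prod_def)

lemma H_fst: "(k, i) \<in> Hset \<Longrightarrow> i \<le> k" unfolding Hset_def by auto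

definition ell :: "nat \<times> nat \<Rightarrow> nat" where "ell p = fst p - snd p"

lemma ell_add: "a \<in> Hset \<Longrightarrow> b \<in> Hset \<Longrightarrow> ell (a + b) = ell a + ell b"
  unfolding Hset_def ell_def by (cases a; cases b) auto

lemma ell_zero: "a \<in> Hset \<Longrightarrow> ell a = 0 \<longleftrightarrow> a = 0"
  unfolding Hset_def ell_def by (cases a) (auto simp: zero_prod_def)

lemma atoms_H: "atoms_of Hset = {(k, k - 1) | k. k \<ge> 1}"
proof (intro set_eqI iffI)
  fix p assume p: "p \<in> atoms_of Hset"
  obtain k i where ki: "p = (k, i)" by (cases p)
  have pH: "p \<in> Hset" "p \<noteq> 0" using p units_H unfolding atoms_of_def by auto
  hence "k > i" using ki unfolding Hset_def by (auto simp: zero_prod_def)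
  show "p \<in> {(k, k - 1) | k. k \<ge> 1}"
  proof (cases "k = Suc i")
    case True thus ?thesis using ki by auto
  next
    case False
    hence "k - 1 > i" using \<open>k > i\<close> by simp
    hence "(k - 1, i) \<in> Hset" unfolding Hset_def by simp
    moreover have "(1::nat, 0::nat) \<in> Hset" unfolding Hset_def by simp
    moreover have "p = (k - 1, i) + (1, 0)"
    proof -
      have "(k - 1, i) + (1::nat, 0::nat) = (k - 1 + 1, i + 0)" by (rule add_Pair)
      also have "\<dots> = (k, i)" using \<open>k > i\<close> by simp
      finally show ?thesis using ki by simp
    qed
    moreover have "(k - 1, i) \<notin> units_in Hset"
      using \<open>k - 1 > i\<close> unfolding units_H H_zero by (simp; arith)
    moreover have "(1::nat, 0::nat) \<notin> units_in Hset"
      unfolding units_H H_zero by simp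
    ultimately show ?thesis using p unfolding atoms_of_def by blast
  qed
next
  fix p :: "nat \<times> nat" assume "p \<in> {(k, k - 1) | k. k \<ge> 1}"
  then obtain k where k: "p = (k, k - 1)" "k \<ge> 1" by blast
  have pH: "p \<in> Hset" using k unfolding Hset_def by auto
  have e1: "ell p = 1" using k unfolding ell_def by simp
  have "p \<notin> units_in Hset" using e1 unfolding units_H by (auto simp: ell_def H_zero)
  moreover have "\<forall>u\<in>Hset. \<forall>v\<in>Hset. p = u + v \<longrightarrow> u \<in> units_in Hset \<or> v \<in> units_in Hset"
  proof (intro ballI impI)
    fix u v assume uv: "u \<in> Hset" "v \<in> Hset" "p = u + v"
    hence "ell u + ell v = 1" using ell_add e1 by metis
    hence "ell u = 0 \<or> ell v = 0" by arith
    thus "u \<in> units_in Hset \<or> v \<in> units_in Hset" using ell_zero uv units_H by auto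
  qed
  ultimately show "p \<in> atoms_of Hset" using pH unfolding atoms_of_def by blast
qed

lemma sum_atoms: "set as \<subseteq> {(k, k - 1) | k. k \<ge> 1} \<Longrightarrow> snd (sum_list as) + length as = fst (sum_list as)"
proof (induction as)
  case (Cons a as) thus ?case by auto
qed simp

lemma sum_rep10: "sum_list (replicate m (1::nat, 0::nat)) = (m, 0)"
  by (induction m) (auto simp: zero_prod_def)

lemma H_atomic: "atomic Hset"
  unfolding atomic_def
proof
  fix p assume "p \<in> Hset - units_in Hset"
  hence pp: "p \<in> Hset" "p \<noteq> (0, 0)" unfolding units_H H_zero by auto
  obtain k i where "p = (k, i)" by (cases p)
  hence ki: "p = (k, i)" "k > i" using pp unfolding Hset_def by auto
  define as where "as = (Suc i, i) # replicate (k - i - 1) (1, 0)"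
  have "set as \<subseteq> atoms_of Hset" unfolding atoms_H as_def by auto
  moreover have "sum_list as = p" unfolding as_def using ki sum_rep10 by simp
  ultimately show "\<exists>as. as \<noteq> [] \<and> set as \<subseteq> atoms_of Hset \<and> sum_list as = p" unfolding as_def by blast
qed

lemma H_hf: "half_factorial Hset"
  unfolding half_factorial_def using H_atomic
proof (intro conjI ballI allI impI)
  fix x as bs assume "set as \<subseteq> atoms_of Hset \<and> set bs \<subseteq> atoms_of Hset \<and> sum_list as = x \<and> sum_list bs = x"
  thus "length as = length bs" using sum_atoms[of as] sum_atoms[of bs] unfolding atoms_H by auto
qed

theorem theorem4p5:
  fixes n :: nat
  assumes "n \<ge> 3"
  shows "(\<forall>L1\<in>LB n. \<forall>L2\<in>LB n. L1 + L2 \<in> LB n) \<and> {0} \<in> LB n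
    \<and> bij_betw (Phi n) (LB n) Hset
    \<and> (\<forall>L1\<in>LB n. \<forall>L2\<in>LB n. Phi n (L1 + L2) = Phi n L1 + Phi n L2)
    \<and> Phi n {0} = (0, 0)
    \<and> submonoid Hset \<and> reduced Hset \<and> atomic Hset \<and> commutative_in Hset
    \<and> cancellative_in Hset \<and> half_factorial Hset
    \<and> atoms_of Hset = {(k, k - 1) | k. k \<ge> 1}"
proof -
  note LBe = LB_eq[OF assms]
  have z: "arith_set n 0 0 = {0}" unfolding arith_set_def by auto
  have z0: "(0, 0) \<in> Hset" unfolding Hset_def by auto
  have c1: "\<forall>L1\<in>LB n. \<forall>L2\<in>LB n. L1 + L2 \<in> LB n \<and> Phi n (L1 + L2) = Phi n L1 + Phi n L2"
  proof (intro ballI)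
    fix L1 L2 assume "L1 \<in> LB n" "L2 \<in> LB n"
    then obtain x1 q1 x2 q2 where h: "(x1, q1) \<in> Hset" "L1 = arith_set n x1 q1"
        "(x2, q2) \<in> Hset" "L2 = arith_set n x2 q2" unfolding LBe by auto
    have s: "(x1 + x2, q1 + q2) \<in> Hset" using H_add[OF h(1) h(3)] by simp
    have "L1 + L2 = arith_set n (x1 + x2) (q1 + q2)" using h arith_sum by simp
    thus "L1 + L2 \<in> LB n \<and> Phi n (L1 + L2) = Phi n L1 + Phi n L2"
      using s h Phi_arith[OF assms] unfolding LBe by auto
  qed
  have "{0} \<in> LB n" unfolding LBe using z z0 by (metis (no_types, lifting) case_prod_conv image_eqI)
  moreover have "Phi n {0} = (0, 0)" using Phi_arith[OF assms z0] z by simp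
  moreover have "bij_betw (Phi n) (LB n) Hset"
  proof (rule bij_betw_byWitness[where f' = "\<lambda>(x, q). arith_set n x q"])
    show "\<forall>a\<in>LB n. (case Phi n a of (x, q) \<Rightarrow> arith_set n x q) = a"
      unfolding LBe using Phi_arith[OF assms] by auto
    show "\<forall>a'\<in>Hset. Phi n (case a' of (x, q) \<Rightarrow> arith_set n x q) = a'"
      using Phi_arith[OF assms] by auto
    show "Phi n ` LB n \<subseteq> Hset" unfolding LBe using Phi_arith[OF assms] by auto
    show "(\<lambda>(x, q). arith_set n x q) ` Hset \<subseteq> LB n" unfolding LBe by simp
  qed
  moreover have "submonoid Hset" unfolding submonoid_def using H_add z0 by (simp add: zero_prod_def)
  moreover have "reduced Hset" unfolding reduced_def using units_H by simp
  moreover have "commutative_in Hset" unfolding commutative_in_def by (simp add: add.commute)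
  moreover have "cancellative_in Hset" unfolding cancellative_in_def by simp
  ultimately show ?thesis using c1 H_atomic H_hf atoms_H by blast
qed

end
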